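(* Assume the setting and hypotheses below, with the constants $c_2>0$ and $\varkappa>0$ independent of $N$ and $M$. Let $l,T>0$, $h=l/N$, $x_i=ih$, and a time mesh $0=t_0<\dots<t_M=T$. For each $j=0,\dots,M-1$ let weights satisfy $g_j^{j+1}>g_{j-1}^{j+1}>\dots>g_0^{j+1}\ge c_2$ and let $\frac{g_j^{j+1}}{2g_j^{j+1}-g_{j-1}^{j+1}}\le\sigma_{j+1}\le1$ (with $g_{-1}^1:=0$); let $\Lambda=\Lambda^{j+1}$ be linear operators on mesh functions vanishing at $x_0,x_N$ with $(-\Lambda y,y)\ge\varkappa\|y\|_0^2$. Let $y$ solve $$\sum_{s=0}^{j}(y_i^{s+1}-y_i^s)g_s^{j+1}=(\Lambda y^{(\sigma_{j+1})})_i+\varphi_i^{j+1}\ (1\le i\le N-1,\ 0\le j\le M-1),\quad y_0^j=y_N^j=0,\quad y_i^0=u_0(x_i),$$ with $y^{(\sigma_{j+1})}=\sigma_{j+1}y^{j+1}+(1-\sigma_{j+1})y^j$. Let $u(x,t)$ be the solution of the differential problem $$\partial_{0t}^\alpha u=\frac{\partial}{\partial x}\Big(k(x,t)\frac{\partial u}{\partial x}\Big)-q(x,t)u+f(x,t),\ 0<x<l,\ 0<t\le T;\quad u(0,t)=u(l,t)=0;\quad u(x,0)=u_0(x),$$ and suppose the scheme has approximation order $\mathcal O(N^{-r_1}+M^{-r_2})$ for some $r_1,r_2>0$, i.e. the truncation error $$\psi_i^{j+1}:=(\Lambda u^{(\sigma_{j+1})})_i-\sum_{s=0}^{j}(u_i^{s+1}-u_i^s)g_s^{j+1}+\varphi_i^{j+1},\qquad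 u_i^j=u(x_i,t_j),$$ satisfies $|\psi_i^{j+1}|\le C(N^{-r_1}+M^{-r_2})$ for all $i,j$ with $C$ independent of $N,M$. Then $\|y^j-u^j\|_0=\mathcal O(N^{-r_1}+M^{-r_2})$ uniformly in $j=0,\dots,M$, i.e. the solution of the scheme converges to $u$ in the mesh $L_2$-norm with the rate of the approximation error.
   Context: $(y,v)=\sum_{i=1}^{N-1}y_iv_ih$, $\|y\|_0^2=(y,y)$. The Caputo derivative of order $\alpha\in(0,1)$ is $\partial_{0t}^\alpha u(x,t)=\frac{1}{\Gamma(1-\alpha)}\int_0^t \partial_\eta u(x,\eta)(t-\eta)^{-\alpha}d\eta$. Here $k\ge c_1>0$, $q\ge0$, $f$ are sufficiently smooth functions. *)

theory Defs
  imports "HOL-Analysis.Analysis"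
begin

text \<open>Mesh functions on the grid x_i = i h, i = 0..N, are represented as nat => real;
  only indices 0..N are meaningful.\<close>

definition mesh_ip :: "nat \<Rightarrow> real \<Rightarrow> (nat \<Rightarrow> real) \<Rightarrow> (nat \<Rightarrow> real) \<Rightarrow> real" where
  "mesh_ip N h y v = (\<Sum>i = 1..N - 1. y i * v i * h)"

definition mesh_norm0 :: "nat \<Rightarrow> real \<Rightarrow> (nat \<Rightarrow> real) \<Rightarrow> real" where
  "mesh_norm0 N h y = sqrt (mesh_ip N h y y)"

definition mesh_zero_bd :: "nat \<Rightarrow> (nat \<Rightarrow> real) \<Rightarrow> bool" where
  "mesh_zero_bd N v \<longleftrightarrow> v 0 = 0 \<and> v N = 0"

definition mesh_linear_op :: "nat \<Rightarrow> ((nat \<Rightarrow> real) \<Rightarrow> (nat \<Rightarrow> real)) \<Rightarrow> bool" where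
  "mesh_linear_op N L \<longleftrightarrow>
     (\<forall>v w. mesh_zero_bd N v \<longrightarrow> mesh_zero_bd N w \<longrightarrow> (\<forall>i\<le>N. v i = w i) \<longrightarrow>
        (\<forall>i\<in>{1..N - 1}. L v i = L w i)) \<and>
     (\<forall>v w a b. mesh_zero_bd N v \<longrightarrow> mesh_zero_bd N w \<longrightarrow>
        (\<forall>i\<in>{1..N - 1}. L (\<lambda>k. a * v k + b * w k) i = a * L v i + b * L w i))"

definition caputo :: "real \<Rightarrow> (real \<Rightarrow> real) \<Rightarrow> real \<Rightarrow> real" where
  "caputo \<alpha> v t = (1 / Gamma (1 - \<alpha>)) * integral {0..t} (\<lambda>\<eta>. deriv v \<eta> * (t - \<eta>) powr (- \<alpha>))"

definition is_solution ::
  "real \<Rightarrow> real \<Rightarrow> real \<Rightarrow> (real \<Rightarrow> real \<Rightarrow> real) \<Rightarrow> (real \<Rightarrow> real \<Rightarrow> real) \<Rightarrow>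
   (real \<Rightarrow> real \<Rightarrow> real) \<Rightarrow> (real \<Rightarrow> real) \<Rightarrow> (real \<Rightarrow> real \<Rightarrow> real) \<Rightarrow> bool" where
  "is_solution \<alpha> l T k q f u0 u \<longleftrightarrow>
     continuous_on ({0..l} \<times> {0..T}) (\<lambda>(x, t). u x t) \<and>
     (\<forall>x\<in>{0<..<l}. \<forall>t\<in>{0<..T}.
        (\<forall>\<eta>\<in>{0<..t}. (\<lambda>s. u x s) differentiable (at \<eta>)) \<and>
        (\<lambda>s. u x s) differentiable (at_right 0) \<and>
        (\<lambda>\<eta>. deriv (\<lambda>s. u x s) \<eta> * (t - \<eta>) powr (- \<alpha>)) integrable_on {0..t} \<and>
        (\<lambda>y. u y t) differentiable (at x) \<and>
        (\<lambda>y. k y t * deriv (\<lambda>z. u z t) y) differentiable (at x) \<and>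
        caputo \<alpha> (\<lambda>s. u x s) t =
          deriv (\<lambda>y. k y t * deriv (\<lambda>z. u z t) y) x - q x t * u x t + f x t) \<and>
     (\<forall>t\<in>{0..T}. u 0 t = 0 \<and> u l t = 0) \<and>
     (\<forall>x\<in>{0..l}. u x 0 = u0 x)"

end

theory Submission imports Defs begin

lemma F_nonneg:
  fixes g D :: "nat \<Rightarrow> real"
  assumes "g 0 \<ge> 0" "\<forall>s<n. g s \<le> g (s+1)" "\<forall>s. D s \<ge> 0"
  shows "(\<Sum>s\<le>n. g s * (D s - D (s+1))) + g n * D (n+1) \<ge> 0"
  using assms
proof (induction n)
  case 0 then show ?case by (simp add: algebra_simps)
next
  case (Suc n)
  have "(\<Sum>s\<le>Suc n. g s * (D s - D (s+1))) + g (Suc n) * D (Suc n+1)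
     = ((\<Sum>s\<le>n. g s * (D s - D (s+1))) + g n * D (n+1)) + (g (Suc n) - g n) * D (Suc n)"
    by (simp add: algebra_simps)
  moreover have "(\<Sum>s\<le>n. g s * (D s - D (s+1))) + g n * D (n+1) \<ge> 0" using Suc by auto
  moreover have "(g (Suc n) - g n) * D (Suc n) \<ge> 0" using Suc.prems by auto
  ultimately show ?case by linarith
qed

lemma abel_D:
  fixes g D :: "nat \<Rightarrow> real"
  assumes "g 0 \<ge> 0" "\<forall>s<n. g s \<le> g (s+1)" "\<forall>s. D s \<ge> 0"
  shows "(\<Sum>s\<le>n. g s * (D s - D (s+1))) + g n * D (n+1) \<ge> (g n - (if n=0 then 0 else g (n-1))) * D n"
proof (cases n)
  case 0 then show ?thesis by (simp add: algebra_simps)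
next
  case (Suc m)
  have "(\<Sum>s\<le>Suc m. g s * (D s - D (s+1))) + g (Suc m) * D (Suc m+1)
     = ((\<Sum>s\<le>m. g s * (D s - D (s+1))) + g m * D (m+1)) + (g (Suc m) - g m) * D (Suc m)"
    by (simp add: algebra_simps)
  moreover have "(\<Sum>s\<le>m. g s * (D s - D (s+1))) + g m * D (m+1) \<ge> 0"
    using F_nonneg[of g m D] assms Suc by auto
  ultimately show ?thesis using Suc by simp
qed

lemma key_ineq:
  fixes G gp \<sigma> w :: real
  assumes "0 \<le> gp" "gp < G" "G / (2*G - gp) \<le> \<sigma>" "\<sigma> \<le> 1"
  shows "(G - gp) * (\<sigma>^2 * w^2) - G * ((1-\<sigma>)^2 * w^2) \<ge> 0"
proof -
  have pos: "2*G - gp > 0" using assms by linarith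
  have s: "G \<le> \<sigma> * (2*G - gp)" using assms(3) pos by (simp add: divide_le_eq)
  have "\<sigma> * (2*G - gp) > 0" using s assms by linarith
  then have s0: "\<sigma> \<ge> 0" using pos by (simp add: zero_less_mult_iff)
  have "(G - gp) * \<sigma>^2 - G * (1-\<sigma>)^2 = 2*G*\<sigma> - G - gp*\<sigma>^2" by (simp add: power2_eq_square algebra_simps)
  also have "\<dots> \<ge> gp*\<sigma>*(1-\<sigma>)" using s by (simp add: power2_eq_square algebra_simps)
  finally have "(G - gp) * \<sigma>^2 - G * (1-\<sigma>)^2 \<ge> 0"
    using assms s0 by (meson mult_nonneg_nonneg order_trans diff_ge_0_iff_ge)
  then have "((G - gp) * \<sigma>^2 - G * (1-\<sigma>)^2) * w^2 \<ge> 0" by simp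
  then show ?thesis by (simp add: algebra_simps)
qed

lemma key_scalar:
  fixes g v :: "nat \<Rightarrow> real"
  assumes "g 0 \<ge> 0" "\<forall>s<j. g s \<le> g (s+1)" "0 \<le> gp" "gp < g j"
    "gp = (if j=0 then 0 else g (j-1))"
    "g j / (2*g j - gp) \<le> \<sigma>" "\<sigma> \<le> 1"
  shows "(\<Sum>s\<le>j. (v (s+1) - v s) * g s) * (\<sigma> * v (j+1) + (1-\<sigma>) * v j)
     \<ge> (1/2) * (\<Sum>s\<le>j. g s * ((v (s+1))^2 - (v s)^2))"
proof -
  define V where "V = \<sigma> * v (j+1) + (1-\<sigma>) * v j"
  define D where "D s = (V - v s)^2" for s
  have eq: "(\<Sum>s\<le>j. (v (s+1) - v s) * g s) * V - (1/2) * (\<Sum>s\<le>j. g s * ((v (s+1))^2 - (v s)^2))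
     = (1/2) * (\<Sum>s\<le>j. g s * (D s - D (s+1)))"
    unfolding sum_distrib_left sum_distrib_right sum_subtractf[symmetric] D_def
    by (rule sum.cong) (auto simp: power2_eq_square algebra_simps)
  have "(\<Sum>s\<le>j. g s * (D s - D (s+1))) + g j * D (j+1) \<ge> (g j - gp) * D j"
    using abel_D[of g j D] assms unfolding D_def by auto
  moreover have "D j = \<sigma>^2 * (v (j+1) - v j)^2" "D (j+1) = (1-\<sigma>)^2 * (v (j+1) - v j)^2"
    unfolding D_def V_def by (simp_all add: power2_eq_square algebra_simps)
  moreover have "(g j - gp) * (\<sigma>^2 * (v (j+1) - v j)^2) - g j * ((1-\<sigma>)^2 * (v (j+1) - v j)^2) \<ge> 0"
    using key_ineq assms by blast
  ultimately have "(g j - gp) * D j - g j * D (j+1) \<ge> 0" "(\<Sum>s\<le>j. g s * (D s - D (s+1))) + g j * D (j+1) \<ge> (g j - gp) * D j" by simp_all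
  then have "(\<Sum>s\<le>j. g s * (D s - D (s+1))) \<ge> 0" by linarith
  then show ?thesis using eq unfolding V_def by linarith
qed

lemma energy:
  fixes g E :: "nat \<Rightarrow> real"
  assumes "\<forall>s<n. g s \<le> g (s+1)" "\<forall>s. 1 \<le> s \<and> s \<le> n \<longrightarrow> E s \<le> A"
  shows "(\<Sum>s\<le>n. g s * (E (s+1) - E s)) - g n * E (n+1) \<ge> - g 0 * E 0 - (g n - g 0) * A"
  using assms
proof (induction n)
  case 0 then show ?case by (simp add: algebra_simps)
next
  case (Suc n)
  have "(\<Sum>s\<le>Suc n. g s * (E (s+1) - E s)) - g (Suc n) * E (Suc n+1)
     = ((\<Sum>s\<le>n. g s * (E (s+1) - E s)) - g n * E (n+1)) - (g (Suc n) - g n) * E (Suc n)"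
    by (simp add: algebra_simps)
  moreover have "(\<Sum>s\<le>n. g s * (E (s+1) - E s)) - g n * E (n+1) \<ge> - g 0 * E 0 - (g n - g 0) * A"
    using Suc by auto
  moreover have "(g (Suc n) - g n) * E (Suc n) \<le> (g (Suc n) - g n) * A"
    using Suc.prems by (intro mult_left_mono) auto
  ultimately show ?case by (simp add: algebra_simps)
qed

lemma mono_g:
  fixes g :: "nat \<Rightarrow> real"
  assumes "\<forall>s<j. g s \<le> g (s+1)" "s \<le> j"
  shows "g 0 \<le> g s"
  using assms(2)
proof (induction s)
  case 0 then show ?case by simp
next
  case (Suc s) then show ?case using assms(1) by (metis Suc_eq_plus1 Suc_le_lessD less_imp_le_nat order_trans)
qed

lemma mono_t:
  fixes t :: "nat \<Rightarrow> real"
  assumes "\<forall>j<M. t j < t (j + 1)" "a \<le> b" "b \<le> M"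
  shows "t a \<le> t b"
  using assms(2,3)
proof (induction b)
  case 0 then show ?case by simp
next
  case (Suc b)
  show ?case
  proof (cases "a = Suc b")
    case True then show ?thesis by simp
  next
    case False
    then have "t a \<le> t b" using Suc by simp
    moreover have "t b < t (b+1)" using assms(1) Suc.prems by simp
    ultimately show ?thesis by simp
  qed
qed

lemma ip_sq_nonneg: "h \<ge> 0 \<Longrightarrow> mesh_ip N h v v \<ge> 0"
  unfolding mesh_ip_def by (intro sum_nonneg) auto

lemma amgm:
  fixes p z k :: real assumes "k > 0"
  shows "p * z \<le> p^2 / (4*k) + k * z^2"
proof -
  have "p^2 / (4*k) + k * z^2 - p * z = (p - 2*k*z)^2 / (4*k)"
    using assms by (simp add: field_simps power2_eq_square)
  moreover have "(p - 2*k*z)^2 / (4*k) \<ge> 0" using assms by simp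
  ultimately show ?thesis by linarith
qed

lemma sq_sum_aux:
  fixes c h :: real and x w :: "nat \<Rightarrow> real"
  shows "(\<Sum>i\<in>I. c * ((x i)^2 - (w i)^2) * h) = c * ((\<Sum>i\<in>I. x i * x i * h) - (\<Sum>i\<in>I. w i * w i * h))"
proof -
  have "(\<Sum>i\<in>I. c * ((x i)^2 - (w i)^2) * h) = (\<Sum>i\<in>I. c * (x i * x i * h - w i * w i * h))"
    by (rule sum.cong) (simp_all add: power2_eq_square algebra_simps)
  also have "\<dots> = c * (\<Sum>i\<in>I. x i * x i * h - w i * w i * h)" by (rule sum_distrib_left[symmetric])
  also have "\<dots> = c * ((\<Sum>i\<in>I. x i * x i * h) - (\<Sum>i\<in>I. w i * w i * h))" by (simp only: sum_subtractf)
  finally show ?thesis .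
qed

lemma ip_split:
  fixes a b Z :: "nat \<Rightarrow> real"
  shows "(\<Sum>i\<in>I. (a i + b i) * Z i * h) = - (\<Sum>i\<in>I. (- a i) * Z i * h) + (\<Sum>i\<in>I. b i * Z i * h)"
proof -
  have "(\<Sum>i\<in>I. (a i + b i) * Z i * h) = (\<Sum>i\<in>I. a i * Z i * h + b i * Z i * h)"
    by (rule sum.cong) (simp_all add: algebra_simps)
  also have "\<dots> = (\<Sum>i\<in>I. a i * Z i * h) + (\<Sum>i\<in>I. b i * Z i * h)" by (rule sum.distrib)
  also have "(\<Sum>i\<in>I. a i * Z i * h) = - (\<Sum>i\<in>I. (- a i) * Z i * h)"
    by (simp add: sum_negf[symmetric])
  finally show ?thesis .
qed

lemma ip_amgm_sum:
  fixes p Z :: "nat \<Rightarrow> real"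
  assumes "\<kappa> > 0" "h \<ge> 0"
  shows "(\<Sum>i\<in>I. p i * Z i * h) \<le> (\<Sum>i\<in>I. p i ^2 * h) / (4*\<kappa>) + \<kappa> * (\<Sum>i\<in>I. Z i * Z i * h)"
proof -
  have "(\<Sum>i\<in>I. p i * Z i * h) \<le> (\<Sum>i\<in>I. p i ^2 * h / (4*\<kappa>) + \<kappa> * (Z i * Z i * h))"
  proof (rule sum_mono)
    fix i
    have "p i * Z i \<le> p i ^2 / (4*\<kappa>) + \<kappa> * (Z i)^2" by (rule amgm[OF assms(1)])
    then have "p i * Z i * h \<le> (p i ^2 / (4*\<kappa>) + \<kappa> * (Z i)^2) * h" using assms(2) by (rule mult_right_mono)
    also have "\<dots> = p i ^2 * h / (4*\<kappa>) + \<kappa> * (Z i * Z i * h)" by (simp add: power2_eq_square algebra_simps)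
    finally show "p i * Z i * h \<le> p i ^2 * h / (4*\<kappa>) + \<kappa> * (Z i * Z i * h)" .
  qed
  also have "\<dots> = (\<Sum>i\<in>I. p i ^2 * h) / (4*\<kappa>) + \<kappa> * (\<Sum>i\<in>I. Z i * Z i * h)"
    by (simp only: sum.distrib sum_divide_distrib sum_distrib_left)
  finally show ?thesis .
qed

lemma step_lemma:
  fixes N :: nat and h l \<kappa> C eps \<sigma> :: real and g :: "nat \<Rightarrow> real"
    and L :: "(nat \<Rightarrow> real) \<Rightarrow> (nat \<Rightarrow> real)" and \<phi> :: "nat \<Rightarrow> real"
    and z :: "nat \<Rightarrow> nat \<Rightarrow> real" and Ys Us :: "nat \<Rightarrow> real"
  assumes hpos: "h > 0" and hl: "real (N-1) * h \<le> l" and kp: "\<kappa> > 0"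
    and g0: "g 0 \<ge> 0" and gm: "\<forall>s<j. g s \<le> g (s+1)" and gp0: "0 \<le> gp" and gpj: "gp < g j"
    and gpd: "gp = (if j=0 then 0 else g (j-1))"
    and s1: "g j / (2*g j - gp) \<le> \<sigma>" and s2: "\<sigma> \<le> 1"
    and Lc: "mesh_linear_op N L" "\<forall>v. mesh_zero_bd N v \<longrightarrow> mesh_ip N h (\<lambda>i. - L v i) v \<ge> \<kappa> * (mesh_norm0 N h v)\<^sup>2"
    and zb: "mesh_zero_bd N Ys" "mesh_zero_bd N Us"
    and zs: "(\<lambda>m. \<sigma> * z (j+1) m + (1-\<sigma>) * z j m) = (\<lambda>k. 1 * Ys k + (-1) * Us k)"
    and eqn: "\<forall>i\<in>{1..N-1}. (\<Sum>s\<le>j. (z (s+1) i - z s i) * g s) = L Ys i - L Us i + psi i"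
    and pb: "\<forall>i\<in>{1..N-1}. \<bar>psi i\<bar> \<le> C * eps"
  shows "(\<Sum>s\<le>j. g s * (mesh_ip N h (z (s+1)) (z (s+1)) - mesh_ip N h (z s) (z s)))
          \<le> 2 * (l * (C*eps)^2 / (4*\<kappa>))"
proof -
  define I where "I = {1..N-1}"
  define Z where "Z = (\<lambda>m. \<sigma> * z (j+1) m + (1-\<sigma>) * z j m)"
  define S where "S i = (\<Sum>s\<le>j. (z (s+1) i - z s i) * g s)" for i
  define Q where "Q i = (\<Sum>s\<le>j. g s * ((z (s+1) i)^2 - (z s i)^2))" for i
  have zbZ: "mesh_zero_bd N Z" using zb unfolding Z_def zs mesh_zero_bd_def by simp
  have lin: "\<forall>i\<in>I. L Z i = L Ys i - L Us i"
  proof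
    fix i assume i: "i \<in> I"
    have L2: "\<forall>i\<in>{1..N - 1}. L (\<lambda>k. 1 * Ys k + (-1) * Us k) i = 1 * L Ys i + (-1) * L Us i"
      using Lc(1) zb unfolding mesh_linear_op_def by blast
    have "Z = (\<lambda>k. 1 * Ys k + (-1) * Us k)" unfolding Z_def zs ..
    then show "L Z i = L Ys i - L Us i" using L2 i unfolding I_def by simp
  qed
  have SZ: "\<forall>i\<in>I. S i = L Z i + psi i" using eqn lin unfolding S_def I_def by simp
  have ipd: "mesh_ip N h v w = (\<Sum>i\<in>I. v i * w i * h)" for v w unfolding mesh_ip_def I_def ..
  have "(\<Sum>s\<le>j. g s * (mesh_ip N h (z (s+1)) (z (s+1)) - mesh_ip N h (z s) (z s)))
      = (\<Sum>s\<le>j. \<Sum>i\<in>I. g s * ((z (s+1) i)^2 - (z s i)^2) * h)"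
    unfolding ipd by (rule sum.cong[OF refl], rule sq_sum_aux[symmetric])
  also have "\<dots> = (\<Sum>i\<in>I. \<Sum>s\<le>j. g s * ((z (s+1) i)^2 - (z s i)^2) * h)"
    by (rule sum.swap)
  also have "\<dots> = (\<Sum>i\<in>I. Q i * h)"
    unfolding Q_def by (simp only: sum_distrib_right)
  finally have lowq: "(\<Sum>s\<le>j. g s * (mesh_ip N h (z (s+1)) (z (s+1)) - mesh_ip N h (z s) (z s)))
      = (\<Sum>i\<in>I. Q i * h)" .
  have "(\<Sum>i\<in>I. ((1/2) * Q i) * h) \<le> (\<Sum>i\<in>I. S i * Z i * h)"
  proof (rule sum_mono)
    fix i assume "i \<in> I"
    have "(1/2) * Q i \<le> S i * Z i"
      using key_scalar[of g j gp \<sigma> "\<lambda>s. z s i", OF g0 gm gp0 gpj gpd s1 s2]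
      unfolding S_def Z_def Q_def by simp
    then show "((1/2) * Q i) * h \<le> S i * Z i * h"
      using hpos by (simp add: mult_right_mono)
  qed
  moreover have "(\<Sum>i\<in>I. ((1/2) * Q i) * h) = (1/2) * (\<Sum>i\<in>I. Q i * h)"
    by (simp add: sum_distrib_left mult.assoc)
  moreover have "(\<Sum>i\<in>I. S i * Z i * h) = (\<Sum>i\<in>I. (L Z i + psi i) * Z i * h)"
    using SZ by (intro sum.cong) auto
  moreover have "(\<Sum>i\<in>I. (L Z i + psi i) * Z i * h) = - mesh_ip N h (\<lambda>i. - L Z i) Z + (\<Sum>i\<in>I. psi i * Z i * h)"
    unfolding ipd by (rule ip_split)
  moreover have "mesh_ip N h (\<lambda>i. - L Z i) Z \<ge> \<kappa> * mesh_ip N h Z Z"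
  proof -
    have "mesh_ip N h (\<lambda>i. - L Z i) Z \<ge> \<kappa> * (mesh_norm0 N h Z)\<^sup>2" using Lc(2) zbZ by blast
    moreover have "(mesh_norm0 N h Z)\<^sup>2 = mesh_ip N h Z Z"
      unfolding mesh_norm0_def using ip_sq_nonneg[of h N Z] hpos by simp
    ultimately show ?thesis by simp
  qed
  moreover have "(\<Sum>i\<in>I. psi i * Z i * h) \<le> (\<Sum>i\<in>I. psi i ^2 * h) / (4*\<kappa>) + \<kappa> * mesh_ip N h Z Z"
    unfolding ipd using ip_amgm_sum[OF kp, where h=h and I=I and p=psi and Z=Z] hpos by simp
  moreover have "(\<Sum>i\<in>I. psi i ^2 * h) / (4*\<kappa>) \<le> l * (C*eps)^2 / (4*\<kappa>)"
  proof -
    have "(\<Sum>i\<in>I. psi i ^2 * h) \<le> (\<Sum>i\<in>I. (C*eps)^2 * h)"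
    proof (rule sum_mono)
      fix i assume "i \<in> I"
      then have "\<bar>psi i\<bar> \<le> C * eps" using pb I_def by auto
      then have "\<bar>psi i\<bar>^2 \<le> (C*eps)^2" by (intro power_mono) auto
      then show "psi i ^2 * h \<le> (C*eps)^2 * h" using hpos by (simp add: mult_right_mono)
    qed
    also have "\<dots> = real (N-1) * h * (C*eps)^2" unfolding I_def by simp
    also have "\<dots> \<le> l * (C*eps)^2" using hl by (intro mult_right_mono) auto
    finally show ?thesis using kp by (simp add: divide_right_mono)
  qed
  ultimately show ?thesis using lowq by linarith
qed

theorem theorem2:
  fixes l T \<alpha> c1 c2 \<kappa> C r1 r2 :: real
    and k q f u :: "real \<Rightarrow> real \<Rightarrow> real" and u0 :: "real \<Rightarrow> real"
  assumes "l > 0" and "T > 0" and "0 < \<alpha>" and "\<alpha> < 1"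
    and "c1 > 0" and "\<forall>x t. k x t \<ge> c1" and "\<forall>x t. q x t \<ge> 0"
    and "c2 > 0" and "\<kappa> > 0" and "C \<ge> 0" and "r1 > 0" and "r2 > 0"
    and "is_solution \<alpha> l T k q f u0 u"
  shows "\<exists>K. \<forall>(N::nat) (M::nat) (t::nat \<Rightarrow> real) (g::nat \<Rightarrow> nat \<Rightarrow> real) (\<sigma>::nat \<Rightarrow> real)
            (\<Lambda>::nat \<Rightarrow> (nat \<Rightarrow> real) \<Rightarrow> (nat \<Rightarrow> real)) (\<phi>::nat \<Rightarrow> nat \<Rightarrow> real)
            (y::nat \<Rightarrow> nat \<Rightarrow> real).
      let h = l / real N in
      N \<ge> 1 \<and> M \<ge> 1 \<and>
      t 0 = 0 \<and> t M = T \<and> (\<forall>j<M. t j < t (j + 1)) \<and>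
      (\<forall>j<M. g j 0 \<ge> c2 \<and> (\<forall>s<j. g j s < g j (s + 1))) \<and>
      (\<forall>j<M. g j j / (2 * g j j - (if j = 0 then 0 else g j (j - 1))) \<le> \<sigma> j \<and> \<sigma> j \<le> 1) \<and>
      (\<forall>j<M. mesh_linear_op N (\<Lambda> j) \<and>
         (\<forall>v. mesh_zero_bd N v \<longrightarrow>
            mesh_ip N h (\<lambda>i. - \<Lambda> j v i) v \<ge> \<kappa> * (mesh_norm0 N h v)\<^sup>2)) \<and>
      (\<forall>j<M. \<forall>i\<in>{1..N - 1}.
         (\<Sum>s\<le>j. (y (s + 1) i - y s i) * g j s)
           = \<Lambda> j (\<lambda>m. \<sigma> j * y (j + 1) m + (1 - \<sigma> j) * y j m) i + \<phi> j i) \<and>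
      (\<forall>j\<le>M. y j 0 = 0 \<and> y j N = 0) \<and>
      (\<forall>i\<in>{1..N - 1}. y 0 i = u0 (real i * h)) \<and>
      (\<forall>j<M. \<forall>i\<in>{1..N - 1}.
         \<bar>\<Lambda> j (\<lambda>m. \<sigma> j * u (real m * h) (t (j + 1)) + (1 - \<sigma> j) * u (real m * h) (t j)) i
           - (\<Sum>s\<le>j. (u (real i * h) (t (s + 1)) - u (real i * h) (t s)) * g j s)
           + \<phi> j i\<bar> \<le> C * (real N powr (- r1) + real M powr (- r2)))
      \<longrightarrow> (\<forall>j\<le>M. mesh_norm0 N h (\<lambda>i. y j i - u (real i * h) (t j))
                   \<le> K * (real N powr (- r1) + real M powr (- r2)))"
proof -
  note a = assms
  define K where "K = C * sqrt (l / (2*\<kappa>*c2))"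
  show ?thesis
  proof (rule exI[of _ K], intro allI, unfold Let_def, intro impI)
    fix N M :: nat and t :: "nat \<Rightarrow> real" and g :: "nat \<Rightarrow> nat \<Rightarrow> real" and \<sigma> :: "nat \<Rightarrow> real"
      and \<Lambda> :: "nat \<Rightarrow> (nat \<Rightarrow> real) \<Rightarrow> (nat \<Rightarrow> real)" and \<phi> :: "nat \<Rightarrow> nat \<Rightarrow> real"
      and y :: "nat \<Rightarrow> nat \<Rightarrow> real"
    define h where "h = l / real N"
    define eps where "eps = real N powr (- r1) + real M powr (- r2)"
    assume H: "1 \<le> N \<and> 1 \<le> M \<and> t 0 = 0 \<and> t M = T \<and> (\<forall>j<M. t j < t (j + 1)) \<and>
      (\<forall>j<M. c2 \<le> g j 0 \<and> (\<forall>s<j. g j s < g j (s + 1))) \<and>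
      (\<forall>j<M. g j j / (2 * g j j - (if j = 0 then 0 else g j (j - 1))) \<le> \<sigma> j \<and> \<sigma> j \<le> 1) \<and>
      (\<forall>j<M. mesh_linear_op N (\<Lambda> j) \<and>
         (\<forall>v. mesh_zero_bd N v \<longrightarrow>
            \<kappa> * (mesh_norm0 N (l / real N) v)\<^sup>2 \<le> mesh_ip N (l / real N) (\<lambda>i. - \<Lambda> j v i) v)) \<and>
      (\<forall>j<M. \<forall>i\<in>{1..N - 1}.
         (\<Sum>s\<le>j. (y (s + 1) i - y s i) * g j s)
           = \<Lambda> j (\<lambda>m. \<sigma> j * y (j + 1) m + (1 - \<sigma> j) * y j m) i + \<phi> j i) \<and>
      (\<forall>j\<le>M. y j 0 = 0 \<and> y j N = 0) \<and>
      (\<forall>i\<in>{1..N - 1}. y 0 i = u0 (real i * (l / real N))) \<and>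
      (\<forall>j<M. \<forall>i\<in>{1..N - 1}.
         \<bar>\<Lambda> j (\<lambda>m. \<sigma> j * u (real m * (l / real N)) (t (j + 1)) + (1 - \<sigma> j) * u (real m * (l / real N)) (t j)) i
           - (\<Sum>s\<le>j. (u (real i * (l / real N)) (t (s + 1)) - u (real i * (l / real N)) (t s)) * g j s)
           + \<phi> j i\<bar> \<le> C * (real N powr (- r1) + real M powr (- r2)))"
    note H = H[folded h_def eps_def]

    note N1 = H[THEN conjunct1]
    note M1 = H[THEN conjunct2, THEN conjunct1]
    note t0 = H[THEN conjunct2, THEN conjunct2, THEN conjunct1]
    note tM = H[THEN conjunct2, THEN conjunct2, THEN conjunct2, THEN conjunct1]
    note tinc = H[THEN conjunct2, THEN conjunct2, THEN conjunct2, THEN conjunct2, THEN conjunct1]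
    note gc = H[THEN conjunct2, THEN conjunct2, THEN conjunct2, THEN conjunct2, THEN conjunct2, THEN conjunct1]
    note sc = H[THEN conjunct2, THEN conjunct2, THEN conjunct2, THEN conjunct2, THEN conjunct2, THEN conjunct2, THEN conjunct1]
    note Lc = H[THEN conjunct2, THEN conjunct2, THEN conjunct2, THEN conjunct2, THEN conjunct2, THEN conjunct2, THEN conjunct2, THEN conjunct1]
    note sch = H[THEN conjunct2, THEN conjunct2, THEN conjunct2, THEN conjunct2, THEN conjunct2, THEN conjunct2, THEN conjunct2, THEN conjunct2, THEN conjunct1]
    note ybd = H[THEN conjunct2, THEN conjunct2, THEN conjunct2, THEN conjunct2, THEN conjunct2, THEN conjunct2, THEN conjunct2, THEN conjunct2, THEN conjunct2, THEN conjunct1]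
    note yinit = H[THEN conjunct2, THEN conjunct2, THEN conjunct2, THEN conjunct2, THEN conjunct2, THEN conjunct2, THEN conjunct2, THEN conjunct2, THEN conjunct2, THEN conjunct2, THEN conjunct1]
    note tr = H[THEN conjunct2, THEN conjunct2, THEN conjunct2, THEN conjunct2, THEN conjunct2, THEN conjunct2, THEN conjunct2, THEN conjunct2, THEN conjunct2, THEN conjunct2, THEN conjunct2]
    have lp: "l > 0" and kp: "\<kappa> > 0" and c2p: "c2 > 0" and Cp: "C \<ge> 0"
      using assms(1) assms(9) assms(8) assms(10) by auto
    have hpos: "h > 0" using lp N1 unfolding h_def by simp
    have hN: "real N * h = l" using N1 unfolding h_def by simp
    have hl: "real (N-1) * h \<le> l" using hN hpos N1 by (simp add: of_nat_diff algebra_simps)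
    have epsp: "eps \<ge> 0" unfolding eps_def by simp
    have trange: "0 \<le> t j \<and> t j \<le> T" if "j \<le> M" for j
      using mono_t[OF tinc, of 0 j] mono_t[OF tinc, of j M] that t0 tM by auto
    have sol: "is_solution \<alpha> l T k q f u0 u" using assms(13) .
    have solb: "(\<forall>t\<in>{0..T}. u 0 t = 0 \<and> u l t = 0) \<and> (\<forall>x\<in>{0..l}. u x 0 = u0 x)"
      using sol[unfolded is_solution_def, THEN conjunct2, THEN conjunct2] .
    have ubd: "u 0 (t j) = 0 \<and> u l (t j) = 0" if "j \<le> M" for j
      using solb trange[OF that] by auto
    have uinit: "u (real i * h) 0 = u0 (real i * h)" if "i \<in> {1..N-1}" for i
    proof -
      have "real i * h \<le> real N * h" using that hpos by (intro mult_right_mono) auto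
      then have "real i * h \<in> {0..l}" using hN hpos by auto
      then show ?thesis using solb by auto
    qed
    define z where "z s i = y s i - u (real i * h) (t s)" for s i
    define E where "E s = mesh_ip N h (z s) (z s)" for s
    define A where "A = l * (C*eps)^2 / (2*\<kappa>*c2)"
    have Ap: "A \<ge> 0" unfolding A_def using lp kp c2p by simp
    have E0: "E 0 = 0"
      unfolding E_def mesh_ip_def z_def using yinit uinit t0 by (intro sum.neutral) auto
    have step: "(\<Sum>s\<le>j. g j s * (E (s+1) - E s)) \<le> 2 * (l * (C*eps)^2 / (4*\<kappa>))" if jM: "j < M" for j
    proof -
      define gp where "gp = (if j=0 then 0 else g j (j-1))"
      define Ys where "Ys = (\<lambda>m. \<sigma> j * y (j + 1) m + (1 - \<sigma> j) * y j m)"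
      define Us where "Us = (\<lambda>m. \<sigma> j * u (real m * h) (t (j + 1)) + (1 - \<sigma> j) * u (real m * h) (t j))"
      define psi where "psi i = \<Lambda> j Us i - (\<Sum>s\<le>j. (u (real i * h) (t (s + 1)) - u (real i * h) (t s)) * g j s) + \<phi> j i" for i
      have gm: "\<forall>s<j. g j s \<le> g j (s+1)" using gc jM by (auto intro: less_imp_le)
      have g0: "g j 0 \<ge> c2" using gc jM by blast
      have gp0: "0 \<le> gp" and gpj: "gp < g j j"
      proof -
        have "0 \<le> gp \<and> gp < g j j"
        proof (cases "j = 0")
          case True then show ?thesis using g0 c2p gp_def by simp
        next
          case False
          have "g j 0 \<le> g j (j-1)" using mono_g[of j "g j" "j-1"] gm by simp
          moreover have "g j (j-1) < g j (j-1+1)"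
          proof -
            have allj: "\<forall>s<j. g j s < g j (s + 1)" using gc jM by blast
            have "j - 1 < j" using False by simp
            with allj show ?thesis by blast
          qed
          ultimately show ?thesis using False g0 c2p gp_def by simp
        qed
        then show "0 \<le> gp" "gp < g j j" by auto
      qed
      have j1: "j+1 \<le> M" "j \<le> M" using jM by auto
      have zb: "mesh_zero_bd N Ys" "mesh_zero_bd N Us"
        unfolding mesh_zero_bd_def Ys_def Us_def using ybd j1 ubd[OF j1(1)] ubd[OF j1(2)] hN by auto
      have zs: "(\<lambda>m. \<sigma> j * z (j+1) m + (1-\<sigma> j) * z j m) = (\<lambda>k. 1 * Ys k + (-1) * Us k)"
        unfolding z_def Ys_def Us_def by (rule ext) (simp add: algebra_simps)
      have eqn: "\<forall>i\<in>{1..N-1}. (\<Sum>s\<le>j. (z (s+1) i - z s i) * g j s) = \<Lambda> j Ys i - \<Lambda> j Us i + psi i"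
      proof
        fix i assume i: "i \<in> {1..N-1}"
        have "(\<Sum>s\<le>j. (z (s+1) i - z s i) * g j s) = (\<Sum>s\<le>j. (y (s + 1) i - y s i) * g j s)
            - (\<Sum>s\<le>j. (u (real i * h) (t (s + 1)) - u (real i * h) (t s)) * g j s)"
          unfolding z_def sum_subtractf[symmetric] by (rule sum.cong) (auto simp: algebra_simps)
        then show "(\<Sum>s\<le>j. (z (s+1) i - z s i) * g j s) = \<Lambda> j Ys i - \<Lambda> j Us i + psi i"
          using sch jM i unfolding psi_def Ys_def by auto
      qed
      have pb: "\<forall>i\<in>{1..N-1}. \<bar>psi i\<bar> \<le> C * eps" using tr jM unfolding psi_def Us_def by blast
      have "(\<Sum>s\<le>j. g j s * (mesh_ip N h (z (s+1)) (z (s+1)) - mesh_ip N h (z s) (z s)))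
          \<le> 2 * (l * (C*eps)^2 / (4*\<kappa>))"
      proof -
        have g0': "g j 0 \<ge> 0" using g0 c2p by linarith
        have s1: "g j j / (2 * g j j - gp) \<le> \<sigma> j" and s2: "\<sigma> j \<le> 1"
          using sc jM unfolding gp_def by blast+
        have L1: "mesh_linear_op N (\<Lambda> j)" and L2: "\<forall>v. mesh_zero_bd N v \<longrightarrow>
            \<kappa> * (mesh_norm0 N h v)\<^sup>2 \<le> mesh_ip N h (\<lambda>i. - \<Lambda> j v i) v"
          using Lc jM by blast+
        show ?thesis by (rule step_lemma[OF hpos hl kp g0' gm gp0 gpj gp_def s1 s2 L1 L2 zb zs eqn pb])
      qed
      then show ?thesis unfolding E_def .
    qed
    have Ebd: "E j \<le> A" if "j \<le> M" for j
      using that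
    proof (induction j rule: less_induct)
      case (less j)
      show ?case
      proof (cases j)
        case 0 then show ?thesis using E0 Ap by simp
      next
        case (Suc m)
        have mM: "m < M" using less.prems Suc by simp
        have gm: "\<forall>s<m. g m s \<le> g m (s+1)" using gc mM by (auto intro: less_imp_le)
        have g0: "g m 0 \<ge> c2" using gc mM by blast
        have gmm: "g m 0 \<le> g m m" using mono_g[of m "g m" m] gm by simp
        have IH: "\<forall>s. 1 \<le> s \<and> s \<le> m \<longrightarrow> E s \<le> A" using less.IH less.prems Suc by auto
        have en: "(\<Sum>s\<le>m. g m s * (E (s+1) - E s)) - g m m * E (m+1) \<ge> - g m 0 * E 0 - (g m m - g m 0) * A"
          using energy[OF gm IH] .
        have st: "(\<Sum>s\<le>m. g m s * (E (s+1) - E s)) \<le> 2 * (l * (C*eps)^2 / (4*\<kappa>))" using step[OF mM] .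
        have "2 * (l * (C*eps)^2 / (4*\<kappa>)) = c2 * A" unfolding A_def using c2p kp by (simp add: field_simps)
        also have "\<dots> \<le> g m 0 * A" using g0 Ap by (simp add: mult_right_mono)
        finally have cA: "2 * (l * (C*eps)^2 / (4*\<kappa>)) \<le> g m 0 * A" .
        have "(g m m - g m 0)*A = g m m * A - g m 0 * A" by (simp add: algebra_simps)
        moreover have "g m 0 * E 0 = 0" by (simp add: E0)
        ultimately have "g m m * E (m+1) \<le> g m m * A" using en st cA by linarith
        moreover have "g m m > 0" using gmm g0 c2p by linarith
        ultimately show ?thesis using Suc by simp
      qed
    qed
    have Ebd_final: "\<forall>j\<le>M. mesh_norm0 N h (\<lambda>i. y j i - u (real i * h) (t j)) \<le> K * eps"
    proof (intro allI impI)
      fix j assume j: "j \<le> M"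
      have "mesh_norm0 N h (\<lambda>i. y j i - u (real i * h) (t j)) = sqrt (E j)"
        unfolding mesh_norm0_def E_def z_def by simp
      also have "\<dots> \<le> sqrt A" using Ebd[OF j] by simp
      also have "sqrt A = C * eps * sqrt (l / (2*\<kappa>*c2))"
      proof -
        have Aeq: "A = (C*eps)^2 * (l / (2*\<kappa>*c2))" unfolding A_def by simp
        have "sqrt A = sqrt ((C*eps)^2) * sqrt (l / (2*\<kappa>*c2))" unfolding Aeq by (rule real_sqrt_mult)
        then show ?thesis using Cp epsp by simp
      qed
      finally show "mesh_norm0 N h (\<lambda>i. y j i - u (real i * h) (t j)) \<le> K * eps"
        unfolding K_def by (simp add: algebra_simps)
    qed
    show "\<forall>j\<le>M. mesh_norm0 N (l / real N) (\<lambda>i. y j i - u (real i * (l / real N)) (t j))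
                   \<le> K * (real N powr (- r1) + real M powr (- r2))"
      unfolding h_def[symmetric] eps_def[symmetric]
      by (rule Ebd_final)
  qed
qed

end
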